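(* Let $0\le\gamma<1$ and let $f\in\mathcal{B}(\Omega_\gamma)$ have the expansion $f(z)=\sum_{n=0}^\infty a_n\left(z+\frac{\gamma}{1-\gamma}\right)^n$ in $\Omega_\gamma$. Define $$\mathcal{C}_f(\rho)=\sum_{n=0}^\infty \frac{1}{n+1}\left(\sum_{k=0}^n\frac{|a_k|}{(1-\gamma)^k}\right)\rho^n,\qquad \rho\in[0,1).$$ Then $$\mathcal{C}_f(\rho)\le \frac{1}{\rho}\log\frac{1}{1-\rho}\qquad\text{for all }\rho\in(0,\rho_0],$$ where $\rho_0\approx 0.533589$ is the unique root in $(0,1)$ of the equation $3(1-\rho)\log(1-\rho)+2\rho=0$. The number $\rho_0$ is best possible: for every $\gamma\in[0,1)$ and every $\rho\in(\rho_0,1)$ there exists $f\in\mathcal{B}(\Omega_\gamma)$ with $\mathcal{C}_f(\rho)>\frac{1}{\rho}\log\frac{1}{1-\rho}$.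
   Context: For $\gamma\in[0,1)$, $\Omega_\gamma=\left\{z\in\mathbb{C}:\left|z+\frac{\gamma}{1-\gamma}\right|<\frac{1}{1-\gamma}\right\}$, the open disk with center $-\frac{\gamma}{1-\gamma}$ and radius $\frac{1}{1-\gamma}$. It contains the unit disk $\mathbb{D}$. The class $\mathcal{B}(\Omega_\gamma)$ consists of all analytic functions $f$ on $\Omega_\gamma$ with $f(\Omega_\gamma)\subseteq\overline{\mathbb{D}}$, that is, $|f|\le 1$ on $\Omega_\gamma$. The map $z\mapsto\gamma+(1-\gamma)z$ sends $\Omega_\gamma$ onto $\mathbb{D}$, and the parameter $\rho$ plays the role of $|\gamma+(1-\gamma)z|$. Since $\Omega_\gamma$ is a disk centered at $-\frac{\gamma}{1-\gamma}$, the Taylor expansion of $f$ about that center converges in all of $\Omega_\gamma$. *)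

theory Defs
  imports "HOL-Analysis.Analysis"
begin

definition Omega :: "real \<Rightarrow> complex set" where
  "Omega \<gamma> = ball (- complex_of_real (\<gamma> / (1 - \<gamma>))) (1 / (1 - \<gamma>))"

definition classB :: "real \<Rightarrow> (complex \<Rightarrow> complex) set" where
  "classB \<gamma> = {f. f analytic_on Omega \<gamma> \<and> (\<forall>z\<in>Omega \<gamma>. norm (f z) \<le> 1)}"

text \<open>C_f(rho), in terms of the coefficient sequence a of the expansion of f about the center.\<close>
definition Cf :: "real \<Rightarrow> (nat \<Rightarrow> complex) \<Rightarrow> real \<Rightarrow> real" where
  "Cf \<gamma> a \<rho> = (\<Sum>n. (1 / real (n + 1)) * (\<Sum>k\<le>n. norm (a k) / (1 - \<gamma>) ^ k) * \<rho> ^ n)"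

definition rho0 :: real where
  "rho0 = (THE \<rho>. 0 < \<rho> \<and> \<rho> < 1 \<and> 3 * (1 - \<rho>) * ln (1 - \<rho>) + 2 * \<rho> = 0)"

end

theory Submission
  imports Defs
begin


lemma root_sum:
  assumes N: "N > 0"
  shows "(\<Sum>j<N. cis (2*pi/N) ^ (j*m)) = (if N dvd m then of_nat N else (0::complex))"
proof -
  define w where "w = cis (2*pi/N)"
  have wN: "w ^ N = 1"
  proof -
    have "w ^ N = cis (real N * (2*pi/N))" by (simp only: w_def Complex.DeMoivre)
    also have "\<dots> = 1" using N by simp
    finally show ?thesis .
  qed
  define z where "z = w ^ m"
  have zj: "\<And>j. w ^ (j*m) = z ^ j" by (metis z_def power_mult mult.commute)
  have zmod: "z = w ^ (m mod N)"
  proof -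
    have "w ^ m = w ^ (m mod N + N * (m div N))" by (simp only: mod_mult_div_eq)
    also have "\<dots> = w ^ (m mod N)" by (metis power_add power_mult wN power_one mult_1_right)
    finally show ?thesis by (simp add: z_def)
  qed
  have zN: "z ^ N = 1" by (simp add: z_def wN flip: power_mult mult.commute)
    (metis mult.commute power_mult power_one wN)
  show ?thesis
  proof (cases "N dvd m")
    case True
    then have "m mod N = 0" by simp
    then have "z = 1" using zmod by simp
    then show ?thesis using True by (simp add: w_def[symmetric] zj)
  next
    case False
    have inj: "inj_on (\<lambda>k. cis (2 * pi * real k / real N)) {..<N}"
      using Complex.bij_betw_roots_unity[OF N] by (simp add: bij_betw_def)
    have "m mod N < N" using N by simp
    have "z \<noteq> 1"
    proof
      assume "z = 1"
      then have "cis (2 * pi * real (m mod N) / real N) = cis (2 * pi * real 0 / real N)"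
        using zmod by (simp add: w_def Complex.DeMoivre mult_ac)
      then have "m mod N = 0" using inj \<open>m mod N < N\<close> N unfolding inj_on_def by blast
      with False show False by auto
    qed
    then have "(\<Sum>j<N. z ^ j) = 0" using zN by (simp add: geometric_sum)
    then show ?thesis using False by (simp add: w_def[symmetric] zj)
  qed
qed

lemma dft_repr:
  fixes b :: "nat \<Rightarrow> complex" and G :: "complex \<Rightarrow> complex"
  assumes sums: "\<And>w. norm w < 1 \<Longrightarrow> (\<lambda>n. b n * w^n) sums G w"
  and N: "N > 0" and r: "0 \<le> r" "r < 1"
  shows "(\<lambda>n. b n * of_real r ^ n * (if N dvd (n+m) then 1 else 0)) sums
     ((1/of_nat N) * (\<Sum>j<N. G (of_real r * cis(2*pi/N)^j) * cis(2*pi/N)^(j*m)))"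
proof -
  define w where "w = cis (2*pi/N)"
  have nw: "norm (w ^ j) = 1" for j by (simp add: w_def norm_power)
  have "(\<lambda>n. b n * (of_real r * w^j)^n * w^(j*m)) sums (G (of_real r * w^j) * w^(j*m))" for j
  proof -
    have "norm (of_real r * w^j) < 1" using r nw by (simp add: norm_mult)
    from sums_mult2[OF sums[OF this]] show ?thesis .
  qed
  then have "(\<lambda>n. \<Sum>j<N. b n * (of_real r * w^j)^n * w^(j*m)) sums (\<Sum>j<N. G (of_real r * w^j) * w^(j*m))"
    by (rule sums_sum)
  moreover have "(\<Sum>j<N. b n * (of_real r * w^j)^n * w^(j*m)) = b n * of_real r ^ n * of_nat N * (if N dvd (n+m) then 1 else 0)" for n
  proof -
    have "(\<Sum>j<N. b n * (of_real r * w^j)^n * w^(j*m)) = (\<Sum>j<N. b n * of_real r ^ n * w^(j*(n+m)))"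
      by (intro sum.cong refl) (simp add: power_mult_distrib power_add algebra_simps flip: power_mult)
    also have "\<dots> = b n * of_real r ^ n * (\<Sum>j<N. w^(j*(n+m)))" by (simp add: sum_distrib_left)
    also have "\<dots> = b n * of_real r ^ n * of_nat N * (if N dvd (n+m) then 1 else 0)"
      using root_sum[OF N, of "n+m"] by (simp add: w_def)
    finally show ?thesis .
  qed
  ultimately have "(\<lambda>n. b n * of_real r ^ n * of_nat N * (if N dvd (n+m) then 1 else 0)) sums (\<Sum>j<N. G (of_real r * w^j) * w^(j*m))"
    by simp
  from sums_mult[OF this, of "1/of_nat N"] N show ?thesis
    by (simp add: w_def mult.assoc)
qed

lemma tail_bound:
  fixes c d :: "nat \<Rightarrow> complex"
  assumes abs: "summable (\<lambda>n. norm (c n))" and s: "(\<lambda>n. c n * d n) sums s"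
  and d1: "\<And>n. norm (d n) \<le> 1" and d0: "\<And>n. n < M \<Longrightarrow> d n = 0"
  shows "norm s \<le> (\<Sum>i. norm (c (i+M)))"
proof -
  have s': "(\<lambda>i. c (i+M) * d (i+M)) sums s"
    using s d0 by (subst sums_zero_iff_shift) auto
  have abs': "summable (\<lambda>i. norm (c (i+M)))"
    using abs by (rule summable_ignore_initial_segment)
  have le: "norm (c (i+M) * d (i+M)) \<le> norm (c (i+M))" for i
    using d1[of "i+M"] by (simp add: norm_mult mult_left_le)
  have sn: "summable (\<lambda>i. norm (c (i+M) * d (i+M)))"
    by (rule summable_comparison_test[OF _ abs']) (use le in auto)
  have "norm s = norm (\<Sum>i. c (i+M) * d (i+M))" using s' by (simp add: sums_iff)
  also have "\<dots> \<le> (\<Sum>i. norm (c (i+M) * d (i+M)))" by (rule summable_norm[OF sn])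
  also have "\<dots> \<le> (\<Sum>i. norm (c (i+M)))" by (rule suminf_le[OF le sn abs'])
  finally show ?thesis .
qed

lemma dvd_window:
  fixes N y :: nat
  assumes "N dvd y" "0 < y" "y < 2*N"
  shows "y = N"
proof -
  obtain q where y: "y = N * q" using assms(1) by (auto simp: dvd_def)
  have "q \<noteq> 0" using y assms(2) by auto
  moreover have "q < 2" using y assms(3) by (metis mult_less_cancel1 mult.commute not_less_zero)
  ultimately have "q = 1" by linarith
  then show ?thesis using y by simp
qed

lemma coeff_bound_r:
  fixes b :: "nat \<Rightarrow> complex" and G :: "complex \<Rightarrow> complex"
  assumes sums: "\<And>w. norm w < 1 \<Longrightarrow> (\<lambda>n. b n * w^n) sums G w"
  and re: "\<And>w. norm w < 1 \<Longrightarrow> Re (G w) \<le> 1"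
  and k: "k \<ge> 1" and r: "0 < r" "r < 1"
  shows "norm (b k) * r ^ k \<le> 2 * (1 - Re (b 0))"
proof (rule field_le_epsilon)
  fix e :: real assume e: "e > 0"
  define c where "c n = b n * of_real r ^ n" for n
  have absum: "summable (\<lambda>n. norm (c n))"
  proof -
    define x where "x = complex_of_real ((1+r)/2)"
    have nx: "norm x = (1+r)/2" using r unfolding x_def norm_of_real by simp
    have "norm x < 1" using r nx by simp
    then have "summable (\<lambda>n. b n * x^n)" using sums sums_summable by blast
    moreover have "norm (complex_of_real r) < norm x" using r nx by simp
    ultimately show ?thesis unfolding c_def by (rule powser_insidea)
  qed
  obtain M0 where M0: "\<And>n. n \<ge> M0 \<Longrightarrow> norm (\<Sum>i. norm (c (i+n))) < e/4"
    using suminf_exist_split[OF _ absum, of "e/4"] e by auto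
  define N where "N = M0 + 2*k + 1"
  have N: "N > 0" "k < N" "N - k \<ge> M0" "0 < N - k" "N - k < N" using k by (auto simp: N_def)
  define T where "T = (\<Sum>i. norm (c (i+(N-k))))"
  have T0: "T \<ge> 0" unfolding T_def
    by (rule suminf_nonneg) (use summable_ignore_initial_segment[OF absum] in auto)
  have Te: "T < e/4" using M0[OF N(3)] T0 by (simp add: T_def)
  define w where "w = cis (2*pi/N)"
  define g where "g j = G (of_real r * w^j)" for j
  have nw: "norm (w ^ j) = 1" for j by (simp add: w_def norm_power)
  have nrw: "norm (of_real r * w^j) < 1" for j using r nw by (simp add: norm_mult)
  define A where "A = (1/of_nat N) * (\<Sum>j<N. g j * w^(j*(N-k)))"
  define B where "B = (1/of_nat N) * (\<Sum>j<N. g j * w^(j*k))"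
  define C where "C = (1/of_nat N) * (\<Sum>j<N. g j * w^(j*0))"
  have sA: "(\<lambda>n. c n * (if N dvd (n+(N-k)) then 1 else 0)) sums A"
    using dft_repr[OF sums N(1), of r "N-k"] r unfolding A_def c_def g_def w_def by simp
  have sB: "(\<lambda>n. c n * (if N dvd (n+k) then 1 else 0)) sums B"
    using dft_repr[OF sums N(1), of r k] r unfolding B_def c_def g_def w_def by simp
  have sC: "(\<lambda>n. c n * (if N dvd (n+0) then 1 else 0)) sums C"
    using dft_repr[OF sums N(1), of r 0] r unfolding C_def c_def g_def w_def by simp
  have eA: "norm (A - c k) \<le> T"
  proof -
    have s': "(\<lambda>n. c n * ((if N dvd (n+(N-k)) then 1 else 0) - (if n = k then 1 else 0))) sums (A - c k)"
    proof -
      have "(\<lambda>n. c n * (if N dvd (n+(N-k)) then 1 else 0) - (if n = k then c n else 0)) sums (A - c k)"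
        by (intro sums_diff sA sums_single)
      also have "(\<lambda>n. c n * (if N dvd (n+(N-k)) then 1 else 0) - (if n = k then c n else 0)) =
         (\<lambda>n. c n * ((if N dvd (n+(N-k)) then 1 else 0) - (if n = k then 1 else 0)))"
        by (rule ext) (simp add: right_diff_distrib)
      finally show ?thesis .
    qed
    have d1: "norm ((if N dvd (n+(N-k)) then 1 else 0) - (if n = k then 1 else 0) :: complex) \<le> 1" for n
      using N by auto
    have d0: "((if N dvd (n+(N-k)) then 1 else 0) - (if n = k then 1 else 0) :: complex) = 0" if "n < N - k" for n
    proof -
      have "N dvd (n+(N-k)) \<longleftrightarrow> n = k"
      proof
        assume "N dvd (n+(N-k))"
        then have "n+(N-k) = N" by (rule dvd_window) (use that N in auto)
        then show "n = k" using N by auto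
      qed (use N in auto)
      then show ?thesis by auto
    qed
    show ?thesis unfolding T_def by (rule tail_bound[OF absum s' d1 d0])
  qed
  have eB: "norm B \<le> T"
  proof -
    have d1: "norm ((if N dvd (n+k) then 1 else 0) :: complex) \<le> 1" for n by auto
    have d0: "((if N dvd (n+k) then 1 else 0) :: complex) = 0" if "n < N - k" for n
    proof -
      have "\<not> N dvd (n+k)"
      proof
        assume "N dvd (n+k)"
        then have "N \<le> n+k" by (rule dvd_imp_le) (use k in auto)
        then show False using that by auto
      qed
      then show ?thesis by auto
    qed
    show ?thesis unfolding T_def using tail_bound[OF absum sB d1 d0] by simp
  qed
  have eC: "norm (C - c 0) \<le> T"
  proof -
    have s': "(\<lambda>n. c n * ((if N dvd (n+0) then 1 else 0) - (if n = 0 then 1 else 0))) sums (C - c 0)"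
    proof -
      have "(\<lambda>n. c n * (if N dvd (n+0) then 1 else 0) - (if n = 0 then c n else 0)) sums (C - c 0)"
        by (intro sums_diff sC sums_single)
      also have "(\<lambda>n. c n * (if N dvd (n+0) then 1 else 0) - (if n = 0 then c n else 0)) =
         (\<lambda>n. c n * ((if N dvd (n+0) then 1 else 0) - (if n = 0 then 1 else 0)))"
        by (rule ext) (simp add: right_diff_distrib)
      finally show ?thesis .
    qed
    have d1: "norm ((if N dvd (n+0) then 1 else 0) - (if n = 0 then 1 else 0) :: complex) \<le> 1" for n
      by auto
    have d0: "((if N dvd (n+0) then 1 else 0) - (if n = 0 then 1 else 0) :: complex) = 0" if "n < N - k" for n
    proof (cases "n = 0")
      case False
      have "\<not> N dvd n"
      proof
        assume "N dvd n"
        then have "N \<le> n" by (rule dvd_imp_le) (use False in auto)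
        then show False using that by auto
      qed
      then show ?thesis using False by auto
    qed auto
    show ?thesis unfolding T_def by (rule tail_bound[OF absum s' d1 d0])
  qed
  have cnjw: "cnj (w^(j*k)) = w^(j*(N-k))" for j
  proof -
    have wN: "w ^ N = 1"
    proof -
      have "w ^ N = cis (real N * (2*pi/N))" by (simp only: w_def Complex.DeMoivre)
      also have "\<dots> = 1" using N by simp
      finally show ?thesis .
    qed
    have prod: "w^(j*k) * w^(j*(N-k)) = 1"
    proof -
      have "w^(j*k) * w^(j*(N-k)) = w^(j*N)" using N
        by (simp flip: power_add add_mult_distrib2)
      also have "\<dots> = 1" by (metis power_mult power_one wN mult.commute)
      finally show ?thesis .
    qed
    have "w^(j*k) * cnj (w^(j*k)) = 1"
      using complex_norm_square[of "w^(j*k)"] nw[of "j*k"] by simp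
    then have "cnj (w^(j*k)) = cnj (w^(j*k)) * (w^(j*k) * w^(j*(N-k)))" using prod by simp
    also have "\<dots> = (w^(j*k) * cnj (w^(j*k))) * w^(j*(N-k))" by (simp add: algebra_simps)
    also have "\<dots> = w^(j*(N-k))" using \<open>w^(j*k) * cnj (w^(j*k)) = 1\<close> by simp
    finally show ?thesis .
  qed
  have sum0: "(\<Sum>j<N. w^(j*(N-k))) = 0"
  proof -
    have "\<not> N dvd (N-k)"
    proof
      assume "N dvd (N-k)"
      then have "N \<le> N - k" by (rule dvd_imp_le) (use N in auto)
      then show False using N k by auto
    qed
    then show ?thesis using root_sum[OF N(1), of "N-k"] by (simp add: w_def)
  qed
  have AB: "A + cnj B = (1/of_nat N) * (\<Sum>j<N. (of_real (2 * Re (g j) - 2)) * w^(j*(N-k)))"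
  proof -
    have "cnj B = (1/of_nat N) * (\<Sum>j<N. cnj (g j) * w^(j*(N-k)))"
      unfolding B_def using cnjw by simp
    then have "A + cnj B = (1/of_nat N) * (\<Sum>j<N. (g j + cnj (g j)) * w^(j*(N-k)))"
      unfolding A_def by (simp add: algebra_simps sum.distrib)
    also have "\<dots> = (1/of_nat N) * (\<Sum>j<N. (of_real (2 * Re (g j))) * w^(j*(N-k)))"
      by (simp add: complex_add_cnj)
    also have "\<dots> = (1/of_nat N) * (\<Sum>j<N. (of_real (2 * Re (g j) - 2)) * w^(j*(N-k)))"
      using sum0 by (simp add: algebra_simps sum.distrib sum_subtractf flip: sum_distrib_left)
    finally show ?thesis .
  qed
  have ReC: "Re C = (1/real N) * (\<Sum>j<N. Re (g j))"
    unfolding C_def by (simp add: Re_sum)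
  have nAB: "norm (A + cnj B) \<le> 2 - 2 * Re C"
  proof -
    have "norm (A + cnj B) \<le> (1/real N) * (\<Sum>j<N. norm (of_real (2 * Re (g j) - 2) * w^(j*(N-k))))"
    proof -
      have "norm (A + cnj B) = (1/real N) * norm (\<Sum>j<N. (of_real (2 * Re (g j) - 2)) * w^(j*(N-k)))"
        unfolding AB by (simp add: norm_mult norm_divide)
      also have "\<dots> \<le> (1/real N) * (\<Sum>j<N. norm (of_real (2 * Re (g j) - 2) * w^(j*(N-k))))"
        by (intro mult_left_mono norm_sum) auto
      finally show ?thesis .
    qed
    also have "\<dots> = (1/real N) * (\<Sum>j<N. (2 - 2 * Re (g j)))"
    proof -
      have "norm (of_real (2 * Re (g j) - 2) * w^(j*(N-k))) = 2 - 2 * Re (g j)" for j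
      proof -
        have "norm (of_real (2 * Re (g j) - 2) * w^(j*(N-k))) = abs (2 * Re (g j) - 2)"
          by (simp only: norm_mult norm_of_real nw mult_1_right)
        also have "\<dots> = 2 - 2 * Re (g j)" using re[OF nrw[of j]] by (simp add: g_def)
        finally show ?thesis .
      qed
      then show ?thesis by simp
    qed
    also have "\<dots> = 2 - 2 * Re C" unfolding ReC using N
      by (simp add: sum_subtractf sum_distrib_left sum_distrib_right field_simps)
    finally show ?thesis .
  qed
  have nck: "norm (c k) = norm (b k) * r ^ k" using r by (simp add: c_def norm_mult norm_power)
  have c0: "c 0 = b 0" by (simp add: c_def)
  have "norm (c k) \<le> norm A + T" using eA norm_triangle_ineq2[of "c k" A] norm_minus_commute[of A "c k"] by linarith
  moreover have "norm A \<le> norm (A + cnj B) + norm B"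
    using norm_triangle_ineq4[of "A + cnj B" "cnj B"] by simp
  moreover have "Re (b 0) - Re C \<le> T"
    using eC c0 abs_Re_le_cmod[of "C - c 0"] by (simp add: abs_le_iff)
  ultimately have "norm (c k) \<le> 2 * (1 - Re (b 0)) + 4 * T"
    using nAB eB by argo
  then have "norm (b k) * r ^ k \<le> 2 * (1 - Re (b 0)) + 4 * T" using nck by simp
  then show "norm (b k) * r ^ k \<le> 2 * (1 - Re (b 0)) + e" using Te by linarith
qed

lemma coeff_bound:
  fixes b :: "nat \<Rightarrow> complex" and G :: "complex \<Rightarrow> complex"
  assumes sums: "\<And>w. norm w < 1 \<Longrightarrow> (\<lambda>n. b n * w^n) sums G w"
  and re: "\<And>w. norm w < 1 \<Longrightarrow> Re (G w) \<le> 1"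
  and k: "k \<ge> 1"
  shows "norm (b k) \<le> 2 * (1 - Re (b 0))"
proof -
  have ev: "eventually (\<lambda>r. norm (b k) * r^k \<le> 2 * (1 - Re (b 0))) (at_left (1::real))"
    using eventually_at_left_real[of 0 "1::real"]
    by (rule eventually_mono) (use coeff_bound_r[OF sums re k] in auto)
  have lim: "((\<lambda>r. norm (b k) * r^k) \<longlongrightarrow> norm (b k) * 1^k) (at_left (1::real))"
    by (intro tendsto_intros)
  show ?thesis using tendsto_upperbound[OF lim ev] by simp
qed

lemma coeff_bound_abs:
  fixes b :: "nat \<Rightarrow> complex" and G :: "complex \<Rightarrow> complex"
  assumes sums: "\<And>w. norm w < 1 \<Longrightarrow> (\<lambda>n. b n * w^n) sums G w"
  and bnd: "\<And>w. norm w < 1 \<Longrightarrow> norm (G w) \<le> 1"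
  and k: "k \<ge> 1"
  shows "norm (b k) \<le> 2 * (1 - norm (b 0))"
proof -
  define u where "u = (if b 0 = 0 then 1 else cnj (b 0) / of_real (norm (b 0)))"
  have nu: "norm u = 1" by (simp add: u_def norm_divide)
  have ub: "u * b 0 = of_real (norm (b 0))"
  proof (cases "b 0 = 0")
    case False
    have "u * b 0 = (b 0 * cnj (b 0)) / of_real (norm (b 0))" using False by (simp add: u_def)
    also have "\<dots> = of_real (norm (b 0))" using False
      by (simp flip: complex_norm_square add: power2_eq_square)
    finally show ?thesis .
  qed (simp add: u_def)
  have s': "(\<lambda>n. (u * b n) * w^n) sums (u * G w)" if "norm w < 1" for w
    using sums_mult[OF sums[OF that], of u] by (simp add: mult.assoc)
  have r': "Re (u * G w) \<le> 1" if "norm w < 1" for w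
    using complex_Re_le_cmod[of "u * G w"] bnd[OF that] nu by (simp add: norm_mult)
  have "norm (u * b k) \<le> 2 * (1 - Re (u * b 0))" by (rule coeff_bound[OF s' r' k])
  then show ?thesis using nu ub by (simp add: norm_mult)
qed

lemma L_sums:
  fixes x :: real
  assumes "0 < x" "x < 1"
  shows "(\<lambda>n. x^n / real (n+1)) sums (- ln (1 - x) / x)"
proof -
  have "(\<lambda>n. - ((-(-x))^n) / of_nat n) sums ln (1 + (-x))"
    by (rule ln_series') (use assms in auto)
  then have "(\<lambda>n. x^n / of_nat n) sums (- ln (1 - x))"
    using sums_minus by fastforce
  then have "(\<lambda>n. x^(Suc n) / of_nat (Suc n)) sums (- ln (1 - x))"
    by (subst sums_Suc_iff) simp
  from sums_divide[OF this, of x] have "(\<lambda>n. x^(Suc n) / of_nat (Suc n) / x) sums (- ln (1 - x) / x)" .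
  also have "(\<lambda>n. x^(Suc n) / of_nat (Suc n) / x) = (\<lambda>n. x^n / real (n+1))"
    using assms by (intro ext) simp
  finally show ?thesis .
qed

definition hh :: "real \<Rightarrow> real" where "hh x = 3 * (1 - x) * ln (1 - x) + 2 * x"

lemma hh_deriv: "x < 1 \<Longrightarrow> (hh has_real_derivative (- 3 * ln (1 - x) - 1)) (at x)"
  unfolding hh_def
  by (rule derivative_eq_intros refl | simp)+ (simp add: field_simps)

definition xs :: real where "xs = 1 - exp (-1/3)"

lemma xs_bounds: "0 < xs" "xs < 1"
  unfolding xs_def by auto

lemma hh_cont: "b < 1 \<Longrightarrow> continuous_on {a..b} hh"
  by (rule DERIV_atLeastAtMost_imp_continuous_on) (metis hh_deriv le_less_trans)

lemma hh_dec:
  assumes "a < b" "b \<le> xs"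
  shows "hh b < hh a"
proof (rule DERIV_neg_imp_decreasing_open[OF assms(1)])
  show "continuous_on {a..b} hh" using assms xs_bounds by (intro hh_cont) auto
next
  fix x assume x: "a < x" "x < b"
  have ex: "exp (-1/3) < 1 - x" using x assms by (simp add: xs_def)
  have "0 < 1 - x" using ex exp_gt_zero[of "-1/3::real"] by linarith
  then have "ln (exp (-1/3)) < ln (1 - x)" using ex by (subst ln_less_cancel_iff) auto
  then have "- 3 * ln (1 - x) - 1 < 0" by simp
  moreover have "x < 1" using x assms xs_bounds by auto
  ultimately show "\<exists>y. (hh has_real_derivative y) (at x) \<and> y < 0" using hh_deriv by blast
qed

lemma hh_inc:
  assumes "xs \<le> a" "a < b" "b < 1"
  shows "hh a < hh b"
proof (rule DERIV_pos_imp_increasing_open[OF assms(2)])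
  show "continuous_on {a..b} hh" using assms by (intro hh_cont) auto
next
  fix x assume x: "a < x" "x < b"
  have "1 - x < exp (-1/3)" using x assms by (simp add: xs_def)
  moreover have "0 < 1 - x" using x assms by auto
  ultimately have "ln (1 - x) < ln (exp (-1/3))" by (subst ln_less_cancel_iff) auto
  then have "- 3 * ln (1 - x) - 1 > 0" by simp
  moreover have "x < 1" using x assms by auto
  ultimately show "\<exists>y. (hh has_real_derivative y) (at x) \<and> y > 0" using hh_deriv by blast
qed

lemma hh0: "hh 0 = 0" by (simp add: hh_def)

lemma hh_neg: "0 < x \<Longrightarrow> x \<le> xs \<Longrightarrow> hh x < 0"
  using hh_dec[of 0 x] hh0 by simp

lemma exp2: "exp (2::real) > 4"
proof -
  have h: "exp (1/2::real) \<ge> 3/2" using exp_ge_add_one_self[of "1/2::real"] by simp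
  have "exp (2::real) = exp (real 4 * (1/2)) " by simp
  also have "\<dots> = exp (1/2) ^ 4" by (rule exp_of_nat_mult)
  also have "\<dots> \<ge> (3/2) ^ 4" by (rule power_mono[OF h]) simp
  finally show ?thesis by (simp add: eval_nat_numeral)
qed

lemma rho0_props: "0 < rho0" "rho0 < 1" "hh rho0 = 0" "xs < rho0"
proof -
  define p where "p = 1 - exp (-2::real)"
  have p1: "p < 1" "0 < p" by (auto simp: p_def)
  have "exp (-2::real) < exp (-1/3)" by simp
  then have xp: "xs < p" by (simp add: xs_def p_def)
  have hp: "hh p > 0"
  proof -
    have "hh p = 2 - 8 * exp (-2)" by (simp add: hh_def p_def)
    moreover have "exp (-2::real) = inverse (exp 2)" by (simp add: exp_minus)
    moreover have "inverse (exp 2) < inverse (4::real)" by (rule less_imp_inverse_less[OF exp2]) simp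
    ultimately show ?thesis by simp
  qed
  have hxs: "hh xs < 0" using hh_neg[OF xs_bounds(1)] by simp
  obtain r where r: "xs \<le> r" "r \<le> p" "hh r = 0"
    using IVT'[of hh xs 0 p] hxs hp xp hh_cont[OF p1(1)] by force
  have rxs: "xs < r" using r hxs by (cases "r = xs") auto
  have r1: "r < 1" using r p1 by auto
  have uniq: "\<rho> = r" if "0 < \<rho>" "\<rho> < 1" "3 * (1 - \<rho>) * ln (1 - \<rho>) + 2 * \<rho> = 0" for \<rho>
  proof -
    have h\<rho>: "hh \<rho> = 0" using that by (simp add: hh_def)
    have "xs < \<rho>" using hh_neg[OF that(1)] h\<rho> by force
    show ?thesis
    proof (rule ccontr)
      assume "\<rho> \<noteq> r"
      then consider "\<rho> < r" | "r < \<rho>" by linarith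
      then show False
      proof cases
        case 1 then show ?thesis using hh_inc[of \<rho> r] \<open>xs < \<rho>\<close> r1 h\<rho> r by auto
      next
        case 2 then show ?thesis using hh_inc[of r \<rho>] rxs that h\<rho> r by auto
      qed
    qed
  qed
  have "rho0 = r" unfolding rho0_def
  proof (rule the_equality)
    show "0 < r \<and> r < 1 \<and> 3 * (1 - r) * ln (1 - r) + 2 * r = 0"
      using rxs xs_bounds r1 r by (auto simp: hh_def)
  qed (use uniq in blast)
  then show "0 < rho0" "rho0 < 1" "hh rho0 = 0" "xs < rho0"
    using rxs xs_bounds r1 r by auto
qed

lemma hh_le: "0 < \<rho> \<Longrightarrow> \<rho> \<le> rho0 \<Longrightarrow> hh \<rho> \<le> 0"
proof -
  assume a: "0 < \<rho>" "\<rho> \<le> rho0"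
  show ?thesis
  proof (cases "\<rho> \<le> xs")
    case True then show ?thesis using hh_neg a by force
  next
    case False
    then show ?thesis using hh_inc[of \<rho> rho0] rho0_props a by (cases "\<rho> = rho0") auto
  qed
qed

lemma hh_gt: "rho0 < \<rho> \<Longrightarrow> \<rho> < 1 \<Longrightarrow> hh \<rho> > 0"
  using hh_inc[of rho0 \<rho>] rho0_props by auto

lemma L_eq: "0 < (\<rho>::real) \<Longrightarrow> \<rho> < 1 \<Longrightarrow> (1 / \<rho>) * ln (1 / (1 - \<rho>)) = - ln (1 - \<rho>) / \<rho>"
  using ln_div[of 1 "1-\<rho>"] by simp

lemma hh_L:
  assumes "0 < \<rho>" "\<rho> < 1"
  shows "3 * (- ln (1 - \<rho>) / \<rho>) - 2 / (1 - \<rho>) = - hh \<rho> / (\<rho> * (1 - \<rho>))"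
  using assms by (simp add: hh_def field_simps)

lemma transfer_series:
  fixes \<gamma> :: real and a :: "nat \<Rightarrow> complex" and f
  assumes g: "0 \<le> \<gamma>" "\<gamma> < 1"
  and hs: "\<forall>z\<in>Omega \<gamma>. (\<lambda>n. a n * (z + complex_of_real (\<gamma> / (1 - \<gamma>))) ^ n) sums f z"
  and w: "norm w < 1"
  shows "(\<lambda>n. (a n / of_real ((1-\<gamma>)^n)) * w^n) sums f (w / of_real (1-\<gamma>) - complex_of_real (\<gamma> / (1 - \<gamma>)))"
    and "w / of_real (1-\<gamma>) - complex_of_real (\<gamma> / (1 - \<gamma>)) \<in> Omega \<gamma>"
proof -
  define c where "c = complex_of_real (\<gamma> / (1 - \<gamma>))"
  define d where "d = 1 - \<gamma>"
  have d: "d > 0" using g by (simp add: d_def)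
  have "dist (- c) (w / of_real d - c) = norm w / d"
    using d by (simp add: dist_norm norm_divide)
  also have "\<dots> < 1 / d" using w d by (simp add: divide_strict_right_mono)
  finally show mem: "w / of_real (1-\<gamma>) - complex_of_real (\<gamma> / (1 - \<gamma>)) \<in> Omega \<gamma>"
    unfolding Omega_def c_def d_def by simp
  have "(\<lambda>n. a n * (w / of_real d - c + c) ^ n) sums f (w / of_real d - c)"
    using hs mem unfolding c_def d_def by blast
  also have "(\<lambda>n. a n * (w / of_real d - c + c) ^ n) = (\<lambda>n. (a n / of_real (d^n)) * w^n)"
    using d by (intro ext) (simp add: power_divide)
  finally show "(\<lambda>n. (a n / of_real ((1-\<gamma>)^n)) * w^n) sums f (w / of_real (1-\<gamma>) - complex_of_real (\<gamma> / (1 - \<gamma>)))"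
    unfolding c_def d_def .
qed

lemma part1:
  fixes \<gamma> :: real and a :: "nat \<Rightarrow> complex" and f
  assumes g: "0 \<le> \<gamma>" "\<gamma> < 1" and fB: "f \<in> classB \<gamma>"
  and hs: "\<forall>z\<in>Omega \<gamma>. (\<lambda>n. a n * (z + complex_of_real (\<gamma> / (1 - \<gamma>))) ^ n) sums f z"
  and r: "0 < \<rho>" "\<rho> \<le> rho0"
  shows "Cf \<gamma> a \<rho> \<le> (1 / \<rho>) * ln (1 / (1 - \<rho>))"
proof -
  have r1: "\<rho> < 1" using r rho0_props by auto
  define b where "b n = a n / of_real ((1-\<gamma>)^n)" for n
  define G where "G w = f (w / of_real (1-\<gamma>) - complex_of_real (\<gamma> / (1 - \<gamma>)))" for w
  have Gs: "(\<lambda>n. b n * w^n) sums G w" if "norm w < 1" for w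
    unfolding b_def G_def by (rule transfer_series(1)[OF g hs that])
  have Gb: "norm (G w) \<le> 1" if "norm w < 1" for w
    using transfer_series(2)[OF g hs that] fB unfolding G_def classB_def by blast
  define \<beta> where "\<beta> k = norm (a k) / (1 - \<gamma>) ^ k" for k
  have \<beta>b: "\<beta> k = norm (b k)" for k
  proof -
    have "norm (complex_of_real ((1-\<gamma>)^k)) = (1-\<gamma>)^k"
      by (simp only: norm_of_real) (use g in simp)
    then show ?thesis by (simp add: \<beta>_def b_def norm_divide)
  qed
  define \<alpha> where "\<alpha> = \<beta> 0"
  have \<alpha>1: "\<alpha> \<le> 1"
  proof -
    have "b 0 = G 0" using Gs[of 0] by simp
    then show ?thesis using Gb[of 0] by (simp add: \<alpha>_def \<beta>b)
  qed
  have \<alpha>0: "\<alpha> \<ge> 0" by (simp add: \<alpha>_def \<beta>b)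
  have \<beta>k: "\<beta> k \<le> 2 * (1 - \<alpha>)" if "k \<ge> 1" for k
    using coeff_bound_abs[OF Gs Gb that] by (simp add: \<alpha>_def \<beta>b)
  have \<beta>0: "\<beta> k \<ge> 0" for k by (simp add: \<beta>b)
  have S: "(\<Sum>k\<le>n. \<beta> k) \<le> \<alpha> + 2 * (1 - \<alpha>) * real n" for n
  proof (induction n)
    case 0 then show ?case by (simp add: \<alpha>_def)
  next
    case (Suc n)
    have "\<beta> (Suc n) \<le> 2 * (1 - \<alpha>)" by (rule \<beta>k) simp
    with Suc show ?case by (simp add: algebra_simps)
  qed
  define L where "L = - ln (1 - \<rho>) / \<rho>"
  define t where "t n = (1 / real (n + 1)) * (\<Sum>k\<le>n. \<beta> k) * \<rho> ^ n" for n
  define u where "u n = \<alpha> * (\<rho>^n / real (n+1)) + 2 * (1 - \<alpha>) * (\<rho>^n - \<rho>^n / real (n+1))" for n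
  have tu: "t n \<le> u n" for n
  proof -
    have "t n \<le> (1 / real (n + 1)) * (\<alpha> + 2 * (1 - \<alpha>) * real n) * \<rho> ^ n"
      unfolding t_def using S[of n] r by (intro mult_right_mono mult_left_mono) auto
    also have "\<dots> = u n"
    proof -
      define q where "q = real (n+1)"
      have q: "q > 0" "q - 1 = real n" by (auto simp: q_def)
      have e: "\<rho>^n - \<rho>^n / q = real n * \<rho>^n / q"
        using q(1) by (simp add: field_simps q(2)[symmetric])
      have "(1 / q) * (\<alpha> + 2 * (1 - \<alpha>) * real n) * \<rho> ^ n = \<alpha> * (\<rho>^n / q) + 2 * (1 - \<alpha>) * (real n * \<rho>^n / q)"
        using q(1) by (simp add: field_simps)
      then show ?thesis unfolding u_def q_def[symmetric] e by simp
    qed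
    finally show ?thesis .
  qed
  have t0: "t n \<ge> 0" for n unfolding t_def using r \<beta>0 by (intro mult_nonneg_nonneg sum_nonneg) auto
  have us: "u sums (\<alpha> * L + 2 * (1 - \<alpha>) * (1 / (1 - \<rho>) - L))"
    unfolding u_def L_def
    by (intro sums_add sums_mult sums_diff L_sums geometric_sums) (use r r1 in auto)
  have ts: "summable t"
    by (rule summable_comparison_test[OF _ sums_summable[OF us]]) (use t0 tu in auto)
  have "Cf \<gamma> a \<rho> = suminf t" unfolding Cf_def t_def \<beta>_def by simp
  also have "\<dots> \<le> suminf u" by (rule suminf_le[OF tu ts sums_summable[OF us]])
  also have "\<dots> = \<alpha> * L + 2 * (1 - \<alpha>) * (1 / (1 - \<rho>) - L)" using us by (simp add: sums_iff)
  also have "\<dots> \<le> L"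
  proof -
    have "3 * L - 2 / (1 - \<rho>) \<ge> 0"
      unfolding L_def hh_L[OF r(1) r1] using hh_le[OF r] r r1
      by (intro divide_nonneg_pos) auto
    then have "(1 - \<alpha>) * (2 * (1 / (1 - \<rho>)) - 3 * L) \<le> 0"
      using \<alpha>1 by (intro mult_nonneg_nonpos) auto
    moreover have "\<And>a L D :: real. a*L + 2*(1-a)*(D - L) - L = (1-a)*(2*D - 3*L)" by algebra
    ultimately show ?thesis by (metis diff_le_0_iff_le)
  qed
  also have "\<dots> = (1 / \<rho>) * ln (1 / (1 - \<rho>))" unfolding L_def using L_eq[OF r(1) r1] by simp
  finally show ?thesis .
qed

definition mobc :: "real \<Rightarrow> nat \<Rightarrow> complex" where
  "mobc \<alpha> n = (case n of 0 \<Rightarrow> of_real \<alpha> | Suc m \<Rightarrow> - of_real ((1 - \<alpha>^2) * \<alpha>^m))"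

lemma mob_sums:
  assumes w: "norm w < 1" and al: "0 \<le> \<alpha>" "\<alpha> < 1"
  shows "(\<lambda>n. mobc \<alpha> n * w^n) sums ((of_real \<alpha> - w) / (1 - of_real \<alpha> * w))"
proof -
  have "norm (of_real \<alpha> * w) = \<alpha> * norm w" using al by (simp add: norm_mult)
  also have "\<dots> \<le> norm w" using al by (intro mult_left_le_one_le) auto
  finally have nw: "norm (of_real \<alpha> * w) < 1" using w by simp
  have ne: "1 - of_real \<alpha> * w \<noteq> 0" using nw by auto
  have "(\<lambda>n. (- of_real (1 - \<alpha>^2) * w) * (of_real \<alpha> * w)^n) sums ((- of_real (1 - \<alpha>^2) * w) * (1 / (1 - of_real \<alpha> * w)))"
    by (rule sums_mult[OF geometric_sums[OF nw]])
  also have "(\<lambda>n. (- of_real (1 - \<alpha>^2) * w) * (of_real \<alpha> * w)^n) = (\<lambda>n. mobc \<alpha> (Suc n) * w^(Suc n))"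
    by (intro ext) (simp add: mobc_def power_mult_distrib algebra_simps)
  finally have "(\<lambda>n. mobc \<alpha> n * w^n) sums ((- of_real (1 - \<alpha>^2) * w) * (1 / (1 - of_real \<alpha> * w)) + mobc \<alpha> 0 * w^0)"
    by (subst (asm) sums_Suc_iff)
  also have "(- of_real (1 - \<alpha>^2) * w) * (1 / (1 - of_real \<alpha> * w)) + mobc \<alpha> 0 * w^0 = (of_real \<alpha> - w) / (1 - of_real \<alpha> * w)"
    using ne by (simp add: mobc_def field_simps power2_eq_square)
  finally show ?thesis .
qed

lemma mob_bound:
  fixes w :: complex
  assumes w: "norm w < 1" and al: "0 \<le> \<alpha>" "\<alpha> < 1"
  shows "norm ((of_real \<alpha> - w) / (1 - of_real \<alpha> * w)) \<le> 1"
proof -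
  define x where "x = Re w"
  define y where "y = Im w"
  have xy: "x^2 + y^2 < 1" using w cmod_power2[of w]
    by (simp add: x_def y_def) (metis norm_ge_zero power_strict_mono power_one zero_less_numeral)
  have "(norm (of_real \<alpha> - w))^2 = (\<alpha> - x)^2 + y^2" by (simp add: cmod_power2 x_def y_def)
  also have "\<dots> \<le> (1 - \<alpha> * x)^2 + (\<alpha> * y)^2"
  proof -
    have "0 \<le> (1 - \<alpha>^2) * (1 - (x^2 + y^2))" using xy al by (intro mult_nonneg_nonneg) (auto simp: power_le_one)
    then show ?thesis by (simp add: power2_eq_square algebra_simps)
  qed
  also have "\<dots> = (norm (1 - of_real \<alpha> * w))^2" by (simp add: cmod_power2 x_def y_def)
  finally have "norm (of_real \<alpha> - w) \<le> norm (1 - of_real \<alpha> * w)"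
    by (rule power2_le_imp_le) simp
  then show ?thesis by (simp add: norm_divide divide_le_eq_1)
qed

lemma part2:
  fixes \<gamma> :: real
  assumes g: "0 \<le> \<gamma>" "\<gamma> < 1" and r: "rho0 < \<rho>" "\<rho> < 1"
  shows "\<exists>f a. f \<in> classB \<gamma> \<and>
               (\<forall>z\<in>Omega \<gamma>. (\<lambda>n. a n * (z + complex_of_real (\<gamma> / (1 - \<gamma>))) ^ n) sums f z) \<and>
               Cf \<gamma> a \<rho> > (1 / \<rho>) * ln (1 / (1 - \<rho>))"
proof -
  have r0: "0 < \<rho>" using r rho0_props by auto
  define L where "L x = - ln (1 - x) / x" for x :: real
  define F where "F \<alpha> = (1 + \<alpha>) * (1 / (1 - \<alpha> * \<rho>) - L (\<alpha> * \<rho>)) - L \<rho>" for \<alpha>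
  have F1: "F 1 > 0"
  proof -
    have "3 * L \<rho> - 2 / (1 - \<rho>) < 0"
      unfolding L_def hh_L[OF r0 r(2)] using hh_gt[OF r] r0 r(2)
      by (intro divide_neg_pos) auto
    then show ?thesis unfolding F_def by (simp add: field_simps)
  qed
  have lim: "(F \<longlongrightarrow> F 1) (at_left 1)"
    unfolding F_def L_def using r0 r(2)
    by (intro tendsto_intros) (auto simp: field_simps)
  have "eventually (\<lambda>\<alpha>. 0 < F \<alpha> \<and> \<alpha> \<in> {0<..<1}) (at_left (1::real))"
    using order_tendstoD(1)[OF lim F1] eventually_at_left_real[of 0 "1::real"]
    by (rule eventually_conj) simp
  then obtain \<alpha> where al: "0 < F \<alpha>" "0 < \<alpha>" "\<alpha> < 1"
    using eventually_happens'[of "at_left (1::real)"] by force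
  define d where "d = 1 - \<gamma>"
  have d: "d > 0" using g by (simp add: d_def)
  define c where "c = complex_of_real (\<gamma> / (1 - \<gamma>))"
  define a where "a n = mobc \<alpha> n * of_real (d^n)" for n
  define f where "f z = (of_real \<alpha> - of_real d * (z + c)) / (1 - of_real \<alpha> * (of_real d * (z + c)))" for z
  have wz: "norm (of_real d * (z + c)) < 1" if "z \<in> Omega \<gamma>" for z
  proof -
    have "norm (z + c) < 1 / d" using that unfolding Omega_def c_def d_def
      by (simp add: dist_norm norm_minus_commute add.commute)
    then have "d * norm (z + c) < 1" using d by (simp add: field_simps)
    moreover have "norm (of_real d * (z + c)) = d * norm (z + c)" by (simp only: norm_mult norm_of_real) (use d in simp)
    ultimately show ?thesis by simp
  qed
  have fB: "f \<in> classB \<gamma>"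
    unfolding classB_def
  proof safe
    have "f holomorphic_on Omega \<gamma>"
    proof -
      have ne: "1 - of_real \<alpha> * (of_real d * (z + c)) \<noteq> 0" if "z \<in> Omega \<gamma>" for z
      proof
        assume "1 - of_real \<alpha> * (of_real d * (z + c)) = 0"
        then have "norm (of_real \<alpha> * (of_real d * (z + c))) = 1" by (simp add: algebra_simps)
        moreover have "norm (of_real \<alpha> * (of_real d * (z + c))) < 1"
        proof -
          have "norm (of_real \<alpha> * (of_real d * (z + c))) = \<alpha> * norm (of_real d * (z + c))"
            using al by (simp add: norm_mult)
          also have "\<dots> \<le> norm (of_real d * (z + c))" using al by (intro mult_left_le_one_le) auto
          finally show ?thesis using wz[OF that] by simp
        qed
        ultimately show False by simp
      qed
      show ?thesis unfolding f_def by (intro holomorphic_intros) (use ne in auto)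
    qed
    then show "f analytic_on Omega \<gamma>" by (simp add: analytic_on_open Omega_def)
  next
    fix z assume "z \<in> Omega \<gamma>"
    show "norm (f z) \<le> 1" unfolding f_def by (rule mob_bound[OF wz[OF \<open>z \<in> Omega \<gamma>\<close>]]) (use al in auto)
  qed
  have fs: "\<forall>z\<in>Omega \<gamma>. (\<lambda>n. a n * (z + c) ^ n) sums f z"
  proof
    fix z assume z: "z \<in> Omega \<gamma>"
    have "(\<lambda>n. mobc \<alpha> n * (of_real d * (z + c))^n) sums f z"
      unfolding f_def by (rule mob_sums[OF wz[OF z]]) (use al in auto)
    also have "(\<lambda>n. mobc \<alpha> n * (of_real d * (z + c))^n) = (\<lambda>n. a n * (z + c) ^ n)"
      by (intro ext) (simp add: a_def power_mult_distrib)
    finally show "(\<lambda>n. a n * (z + c) ^ n) sums f z" .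
  qed
  define \<beta> where "\<beta> k = norm (a k) / (1 - \<gamma>) ^ k" for k
  have \<beta>m: "\<beta> k = norm (mobc \<alpha> k)" for k
  proof -
    have "norm (complex_of_real (d^k)) = d^k"
      by (simp only: norm_of_real) (use d in simp)
    then show ?thesis using d by (simp add: \<beta>_def a_def norm_mult d_def)
  qed
  have \<beta>0: "\<beta> 0 = \<alpha>" using al by (simp add: \<beta>m mobc_def)
  have \<beta>S: "\<beta> (Suc m) = (1 - \<alpha>^2) * \<alpha>^m" for m
  proof -
    have "0 \<le> 1 - \<alpha>^2" using al by (simp add: power_le_one)
    have "\<beta> (Suc m) = norm (- complex_of_real ((1 - \<alpha>^2) * \<alpha>^m))"
      by (simp only: \<beta>m mobc_def nat.case)
    also have "\<dots> = \<bar>(1 - \<alpha>^2) * \<alpha>^m\<bar>" by (simp only: norm_minus_cancel norm_of_real)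
    finally show ?thesis using \<open>0 \<le> 1 - \<alpha>^2\<close> al by simp
  qed
  have \<beta>nn: "0 \<le> \<beta> k" for k by (simp add: \<beta>m)
  have \<beta>1: "\<beta> k \<le> 1" for k
  proof (cases k)
    case 0 then show ?thesis using al \<beta>0 by simp
  next
    case (Suc m)
    have "\<alpha>^m \<le> 1" using al by (simp add: power_le_one)
    moreover have "0 \<le> 1 - \<alpha>^2" "1 - \<alpha>^2 \<le> 1" using al by (auto simp: power_le_one)
    moreover have "0 \<le> \<alpha>^m" using al by simp
    ultimately have "(1 - \<alpha>^2) * \<alpha>^m \<le> 1" by (intro mult_le_one)
    then show ?thesis using Suc \<beta>S by simp
  qed
  have S: "\<alpha> + (1 - \<alpha>^2) * real n * \<alpha>^n \<le> (\<Sum>k\<le>n. \<beta> k)" for n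
  proof (induction n)
    case 0 then show ?case by (simp add: \<beta>0)
  next
    case (Suc n)
    have p: "0 \<le> 1 - \<alpha>^2" using al by (simp add: power_le_one)
    have "\<alpha>^(Suc n) \<le> \<alpha>^n" using al by (simp add: power_decreasing_iff)
    have "(1 - \<alpha>^2) * real (Suc n) * \<alpha>^(Suc n) \<le> (1 - \<alpha>^2) * real (Suc n) * \<alpha>^n"
      using \<open>\<alpha>^(Suc n) \<le> \<alpha>^n\<close> p by (intro mult_left_mono) auto
    also have "\<dots> = (1 - \<alpha>^2) * real n * \<alpha>^n + \<beta> (Suc n)" by (simp add: \<beta>S algebra_simps)
    finally show ?case using Suc by simp
  qed
  define t where "t n = (1 / real (n + 1)) * (\<Sum>k\<le>n. \<beta> k) * \<rho> ^ n" for n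
  define v where "v n = \<alpha> * (\<rho>^n / real (n+1)) + (1 - \<alpha>^2) * ((\<alpha>*\<rho>)^n - (\<alpha>*\<rho>)^n / real (n+1))" for n
  have vt: "v n \<le> t n" for n
  proof -
    define q where "q = real (n+1)"
    have q: "q > 0" "q - 1 = real n" by (auto simp: q_def)
    have e: "(\<alpha>*\<rho>)^n - (\<alpha>*\<rho>)^n / q = real n * (\<alpha>*\<rho>)^n / q"
      using q(1) by (simp add: field_simps q(2)[symmetric])
    have "v n = (1 / q) * (\<alpha> + (1 - \<alpha>^2) * real n * \<alpha>^n) * \<rho> ^ n"
      unfolding v_def q_def[symmetric] e using q(1) by (simp add: field_simps power_mult_distrib)
    also have "\<dots> \<le> t n" unfolding t_def q_def[symmetric] using S[of n] r0 q(1)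
      by (intro mult_right_mono mult_left_mono) auto
    finally show ?thesis .
  qed
  have ar1: "\<alpha> * \<rho> \<le> \<rho>" using al r0 by (intro mult_left_le_one_le) auto
  have ar: "0 < \<alpha> * \<rho>" "\<alpha> * \<rho> < 1" using al r0 apply simp using ar1 r(2) by linarith
  have vs: "v sums (\<alpha> * L \<rho> + (1 - \<alpha>^2) * (1 / (1 - \<alpha> * \<rho>) - L (\<alpha> * \<rho>)))"
    unfolding v_def L_def
    by (intro sums_add sums_mult sums_diff L_sums geometric_sums) (use r0 r(2) ar in auto)
  have t0: "0 \<le> t n" for n unfolding t_def using r0 \<beta>nn by (intro mult_nonneg_nonneg sum_nonneg) auto
  have tle: "t n \<le> \<rho>^n" for n
  proof -
    have "(\<Sum>k\<le>n. \<beta> k) \<le> (\<Sum>k\<le>n. 1)" by (intro sum_mono \<beta>1)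
    then have "(\<Sum>k\<le>n. \<beta> k) \<le> real (n+1)" by simp
    then have "(1 / real (n + 1)) * (\<Sum>k\<le>n. \<beta> k) \<le> 1" by (simp add: field_simps)
    moreover have "0 \<le> (1 / real (n + 1)) * (\<Sum>k\<le>n. \<beta> k)"
      using sum_nonneg[of "{..n}" \<beta>] \<beta>nn by simp
    moreover have "0 \<le> \<rho>^n" using r0 by simp
    ultimately show ?thesis unfolding t_def by (intro mult_left_le_one_le)
  qed
  have ts: "summable t"
    by (rule summable_comparison_test[OF _ summable_geometric[of \<rho>]]) (use t0 tle r0 r(2) in auto)
  have "(1 / \<rho>) * ln (1 / (1 - \<rho>)) = L \<rho>" unfolding L_def using L_eq[OF r0 r(2)] by simp
  also have "\<dots> < \<alpha> * L \<rho> + (1 - \<alpha>^2) * (1 / (1 - \<alpha> * \<rho>) - L (\<alpha> * \<rho>))"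
  proof -
    have "0 < (1 - \<alpha>) * F \<alpha>" using al by simp
    moreover have "\<And>a Lr D La :: real. a * Lr + (1 - a^2) * (D - La) - Lr = (1 - a) * ((1 + a) * (D - La) - Lr)"
      by (simp add: power2_eq_square algebra_simps)
    ultimately show ?thesis unfolding F_def by (metis diff_gt_0_iff_gt)
  qed
  also have "\<dots> = suminf v" using vs by (simp add: sums_iff)
  also have "\<dots> \<le> suminf t" by (rule suminf_le[OF vt sums_summable[OF vs] ts])
  also have "\<dots> = Cf \<gamma> a \<rho>" unfolding Cf_def t_def \<beta>_def by simp
  finally show ?thesis using fB fs unfolding c_def by blast
qed




theorem theorem1:
  fixes \<gamma> :: real
  assumes "0 \<le> \<gamma>" and "\<gamma> < 1"
  shows "(\<forall>f a \<rho>. f \<in> classB \<gamma> \<longrightarrow>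
            (\<forall>z\<in>Omega \<gamma>. (\<lambda>n. a n * (z + complex_of_real (\<gamma> / (1 - \<gamma>))) ^ n) sums f z) \<longrightarrow>
            0 < \<rho> \<longrightarrow> \<rho> \<le> rho0 \<longrightarrow>
            Cf \<gamma> a \<rho> \<le> (1 / \<rho>) * ln (1 / (1 - \<rho>)))
       \<and> (\<forall>\<rho>. rho0 < \<rho> \<longrightarrow> \<rho> < 1 \<longrightarrow>
            (\<exists>f a. f \<in> classB \<gamma> \<and>
               (\<forall>z\<in>Omega \<gamma>. (\<lambda>n. a n * (z + complex_of_real (\<gamma> / (1 - \<gamma>))) ^ n) sums f z) \<and>
               Cf \<gamma> a \<rho> > (1 / \<rho>) * ln (1 / (1 - \<rho>))))"
  using part1[OF assms] part2[OF assms] by blast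


end
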